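(* Let $\mathcal P\subset\mathbb R^n$ be an $n$-dimensional convex polytope and consider $\dot x=Ax+a+Bu$, $x\in\mathcal P$, with $\operatorname{rank}(B)=n-1$, $(A,B)$ controllable and $\operatorname{int}\mathcal P\cap\mathcal O=\emptyset$. Let $y\ne z$ be points of $\mathcal P$ and let $l$ be the line segment joining them. If $z,y\notin\mathcal O$ and $\beta^Ty<\beta^Tz$, then $z\xrightarrow{l}y$.
   Context: $\mathcal B=\operatorname{Im}(B)$, $\mathcal O=\{x:Ax+a\in\mathcal B\}$; $\beta$ is the unit normal to $\mathcal B$ with $\beta^T(Ax+a)\le0$ for all $x\in\mathcal P$. $z\xrightarrow{l}y$ means there exist a piecewise continuous control $u$ and $T\ge0$ such that the solution $\phi^u_t(z)$ satisfies $\phi^u_T(z)=y$ and $\phi^u_t(z)\in l$ for all $t\in[0,T]$. *)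

theory Defs
  imports "HOL-Analysis.Analysis"
begin

definition mat_pow :: "real^'n^'n \<Rightarrow> nat \<Rightarrow> real^'n^'n" where
  "mat_pow A k = ((\<lambda>M. A ** M) ^^ k) (mat 1)"

definition controllable :: "real^'n^'n \<Rightarrow> real^'m^'n \<Rightarrow> bool" where
  "controllable A B \<longleftrightarrow>
     dim (span (\<Union>k<CARD('n). columns (mat_pow A k ** B))) = CARD('n)"

(* u is piecewise continuous on [0,T]: finitely many breakpoints
   0 = t_0 < t_1 < ... < t_k = T, and on each open piece u coincides with a
   function continuous on the closed piece (so one-sided limits exist). *)
definition piecewise_continuous_on :: "real \<Rightarrow> (real \<Rightarrow> 'b::real_normed_vector) \<Rightarrow> bool" where
  "piecewise_continuous_on T u \<longleftrightarrow>
     (\<exists>ts::real list. ts \<noteq> [] \<and> hd ts = 0 \<and> last ts = T \<and> sorted ts \<and>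
        (\<forall>i < length ts - 1. \<exists>g. continuous_on {ts!i..ts!(Suc i)} g \<and>
              (\<forall>t. ts!i < t \<and> t < ts!(Suc i) \<longrightarrow> u t = g t)))"

(* phi is the (Caratheodory) solution on [0,T] of x' = A x + a + B u(t), x(0) = z *)
definition is_solution ::
  "real^'n^'n \<Rightarrow> real^'n \<Rightarrow> real^'m^'n \<Rightarrow> (real \<Rightarrow> real^'m) \<Rightarrow> real^'n \<Rightarrow> real
     \<Rightarrow> (real \<Rightarrow> real^'n) \<Rightarrow> bool" where
  "is_solution A a B u z T phi \<longleftrightarrow>
     continuous_on {0..T} phi \<and> phi 0 = z \<and>
     (\<forall>t\<in>{0..T}. ((\<lambda>s. A *v phi s + a + B *v u s) has_integral (phi t - z)) {0..t})"

definition reach_within ::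
  "real^'n^'n \<Rightarrow> real^'n \<Rightarrow> real^'m^'n \<Rightarrow> real^'n \<Rightarrow> (real^'n) set \<Rightarrow> real^'n \<Rightarrow> bool" where
  "reach_within A a B z l y \<longleftrightarrow>
     (\<exists>u T phi. T \<ge> 0 \<and> piecewise_continuous_on T u \<and> is_solution A a B u z T phi \<and>
        phi T = y \<and> (\<forall>t\<in>{0..T}. phi t \<in> l))"

definition O_set :: "real^'n^'n \<Rightarrow> real^'n \<Rightarrow> real^'m^'n \<Rightarrow> (real^'n) set" where
  "O_set A a B = {x. A *v x + a \<in> range (\<lambda>v. B *v v)}"

end

theory Submission
  imports Defs
begin

lemma ode_aux:
  fixes \<alpha> \<gamma> :: real
  assumes a: "\<alpha> > 0" and b: "\<alpha> + \<gamma> > 0"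
  shows "\<exists>s T. T > 0 \<and> s 0 = 0 \<and> s T = 1 \<and> (\<forall>t\<in>{0..T}. 0 \<le> s t \<and> s t \<le> 1) \<and>
     (\<forall>t. (s has_real_derivative (\<alpha> + \<gamma> * s t)) (at t))"
proof (cases "\<gamma> = 0")
  case True
  show ?thesis
    apply (rule exI[of _ "\<lambda>t. \<alpha> * t"], rule exI[of _ "1/\<alpha>"])
    using a True by (auto intro!: derivative_eq_intros simp: field_simps)
next
  case False
  define T where "T = ln ((\<alpha>+\<gamma>)/\<alpha>) / \<gamma>"
  have eT: "exp (\<gamma> * T) = (\<alpha>+\<gamma>)/\<alpha>" using False a b by (simp add: T_def)
  have Tpos: "T > 0"
  proof (cases "\<gamma> > 0")
    case True
    then have "(\<alpha>+\<gamma>)/\<alpha> > 1" using a by (simp add: field_simps)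
    then show ?thesis using True by (simp add: T_def)
  next
    case f: False
    then have "\<gamma> < 0" using False by simp
    moreover have "(\<alpha>+\<gamma>)/\<alpha> < 1" "(\<alpha>+\<gamma>)/\<alpha> > 0" using a b \<open>\<gamma><0\<close> by (auto simp: field_simps)
    ultimately show ?thesis by (simp add: T_def divide_neg_neg)
  qed
  define s where "s = (\<lambda>t. \<alpha> / \<gamma> * (exp (\<gamma>*t) - 1))"
  have H: "0 \<le> s t \<and> s t \<le> 1" if t: "t \<in> {0..T}" for t
    proof (cases "\<gamma> > 0")
      case True
      have "exp (\<gamma>*t) \<ge> 1" using True t by simp
      moreover have "exp (\<gamma>*t) \<le> exp (\<gamma>*T)" using True t by (simp add: mult_left_mono)
      then have "\<alpha> * exp (\<gamma>*t) \<le> \<alpha> * exp (\<gamma>*T)" using a by simp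
      then have "\<alpha> * exp (\<gamma>*t) \<le> \<alpha> + \<gamma>" using eT a by simp
      ultimately show ?thesis using True a by (auto simp: field_simps s_def)
    next
      case f: False
      then have g: "\<gamma> < 0" using False by simp
      have "exp (\<gamma>*t) \<le> 1" using g t by (simp add: mult_nonpos_nonneg)
      moreover have "exp (\<gamma>*t) \<ge> exp (\<gamma>*T)" using g t by (simp add: mult_left_mono_neg)
      then have "\<alpha> * exp (\<gamma>*t) \<ge> \<alpha> * exp (\<gamma>*T)" using a by simp
      then have "\<alpha> * exp (\<gamma>*t) \<ge> \<alpha> + \<gamma>" using eT a by simp
      ultimately show ?thesis using g a by (auto simp: field_simps s_def)
    qed
  have D: "(s has_real_derivative (\<alpha> + \<gamma> * s t)) (at t)" for t
    unfolding s_def using False by (auto intro!: derivative_eq_intros simp: field_simps)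
  have "s 0 = 0" "s T = 1" unfolding s_def using eT False a by (simp_all add: field_simps)
  then show ?thesis using H D Tpos by blast
qed

theorem lemma5:
  fixes P :: "(real^'n) set" and A :: "real^'n^'n" and a :: "real^'n"
    and B :: "real^'m^'n" and \<beta> y z :: "real^'n"
  assumes "polytope P" and "aff_dim P = int CARD('n)"
    and "rank B = CARD('n) - 1"
    and "controllable A B"
    and "interior P \<inter> O_set A a B = {}"
    and "norm \<beta> = 1" and "\<forall>v. \<beta> \<bullet> (B *v v) = 0"
    and "\<forall>x\<in>P. \<beta> \<bullet> (A *v x + a) \<le> 0"
    and "y \<in> P" and "z \<in> P" and "y \<noteq> z"
    and "z \<notin> O_set A a B" and "y \<notin> O_set A a B"
    and "\<beta> \<bullet> y < \<beta> \<bullet> z"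
  shows "reach_within A a B z (closed_segment z y) y"
proof -
  have b0: "\<beta> \<noteq> 0" using assms(6) by auto
  define S where "S = range (\<lambda>v. B *v v)"
  define H where "H = {w::real^'n. \<beta> \<bullet> w = 0}"
  have subS: "subspace S" unfolding S_def
    using linear_subspace_image[OF matrix_vector_mul_linear[of B] subspace_UNIV] by simp
  have subH: "subspace H" unfolding H_def by (rule subspace_hyperplane)
  have SH: "S \<subseteq> H" using assms(7) by (auto simp: S_def H_def)
  have dS: "dim S = CARD('n) - 1" using assms(3) by (simp add: S_def rank_dim_range)
  have dH: "dim H = CARD('n) - 1" unfolding H_def using dim_hyperplane[OF b0] by simp
  have SeqH: "S = H" using subspace_dim_equal[OF subS subH SH] dS dH by simp
  have Hr: "\<exists>v. B *v v = w" if "\<beta> \<bullet> w = 0" for w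
  proof -
    have "w \<in> H" using that by (simp add: H_def)
    then have "w \<in> S" using SeqH by simp
    then show ?thesis unfolding S_def by (metis rangeE)
  qed
  have fneg: "\<beta> \<bullet> (A *v x + a) < 0" if "x \<in> P" "x \<notin> O_set A a B" for x
  proof -
    have "\<beta> \<bullet> (A *v x + a) \<noteq> 0"
    proof
      assume "\<beta> \<bullet> (A *v x + a) = 0"
      then obtain v where "B *v v = A *v x + a" using Hr by blast
      then have "x \<in> O_set A a B" unfolding O_set_def by (metis rangeI mem_Collect_eq)
      then show False using that(2) by simp
    qed
    then show ?thesis using assms(8) that(1) by force
  qed
  define d where "d = y - z"
  define bd where "bd = \<beta> \<bullet> d"
  have bdneg: "bd < 0" using assms(14) by (simp add: bd_def d_def inner_diff_right)
  define \<alpha> where "\<alpha> = \<beta> \<bullet> (A *v z + a) / bd"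
  define \<gamma> where "\<gamma> = \<beta> \<bullet> (A *v d) / bd"
  have fz: "\<beta> \<bullet> (A *v z + a) < 0" using fneg assms by blast
  have fy: "\<beta> \<bullet> (A *v y + a) < 0" using fneg assms by blast
  have apos: "\<alpha> > 0" using fz bdneg by (simp add: \<alpha>_def divide_neg_neg)
  have "\<beta> \<bullet> (A *v y + a) = \<beta> \<bullet> (A *v z + a) + \<beta> \<bullet> (A *v d)"
    by (simp add: d_def matrix_vector_mult_diff_distrib inner_diff_right inner_add_right)
  then have "\<alpha> + \<gamma> = \<beta> \<bullet> (A *v y + a) / bd" by (simp add: \<alpha>_def \<gamma>_def add_divide_distrib)
  then have agpos: "\<alpha> + \<gamma> > 0" using fy bdneg by (simp add: divide_neg_neg)
  obtain s T where T: "T > 0" and s0: "s 0 = 0" and sT: "s T = 1"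
    and s01: "\<forall>t\<in>{0..T}. 0 \<le> s t \<and> s t \<le> 1"
    and sD: "\<forall>t. (s has_real_derivative (\<alpha> + \<gamma> * s t)) (at t)"
    using ode_aux[OF apos agpos] by blast
  define w0 where "w0 = \<alpha> *\<^sub>R d - (A *v z + a)"
  define w1 where "w1 = \<gamma> *\<^sub>R d - A *v d"
  have "\<beta> \<bullet> w0 = 0" using bdneg
    by (simp add: w0_def \<alpha>_def inner_diff_right bd_def[symmetric])
  then obtain v0 where v0: "B *v v0 = w0" using Hr by blast
  have "\<beta> \<bullet> w1 = 0" using bdneg
    by (simp add: w1_def \<gamma>_def inner_diff_right bd_def[symmetric])
  then obtain v1 where v1: "B *v v1 = w1" using Hr by blast
  define u where "u = (\<lambda>t. v0 + s t *\<^sub>R v1)"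
  define phi where "phi = (\<lambda>t. z + s t *\<^sub>R d)"
  have scont: "continuous_on X s" for X
    using sD by (meson DERIV_isCont continuous_at_imp_continuous_on)
  have ucont: "continuous_on X u" for X
    unfolding u_def by (intro continuous_intros scont)
  have phicont: "continuous_on X phi" for X
    unfolding phi_def by (intro continuous_intros scont)
  have phiD: "(phi has_vector_derivative (\<alpha> + \<gamma> * s t) *\<^sub>R d) (at t)" for t
    unfolding phi_def
    using sD[rule_format, of t]
    by (auto intro!: derivative_eq_intros)
  have eqn: "A *v phi t + a + B *v u t = (\<alpha> + \<gamma> * s t) *\<^sub>R d" for t
    unfolding phi_def u_def
    by (simp add: matrix_vector_right_distrib matrix_vector_mult_scaleR v0 v1 w0_def w1_def
        algebra_simps scaleR_diff_right)
  have pc: "piecewise_continuous_on T u"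
    unfolding piecewise_continuous_on_def
    apply (rule exI[of _ "[0, T]"])
    using T ucont by auto
  have sol: "is_solution A a B u z T phi"
    unfolding is_solution_def
  proof (intro conjI ballI)
    show "continuous_on {0..T} phi" by (rule phicont)
    show "phi 0 = z" by (simp add: phi_def s0)
    fix t assume "t \<in> {0..T}"
    then have "0 \<le> t" by simp
    have "((\<lambda>x. (\<alpha> + \<gamma> * s x) *\<^sub>R d) has_integral (phi t - phi 0)) {0..t}"
      by (rule fundamental_theorem_of_calculus[OF \<open>0 \<le> t\<close>])
         (rule has_vector_derivative_at_within[OF phiD])
    then show "((\<lambda>x. A *v phi x + a + B *v u x) has_integral (phi t - z)) {0..t}"
    proof -
      have e2: "(\<lambda>x. A *v phi x + a + B *v u x) = (\<lambda>x. (\<alpha> + \<gamma> * s x) *\<^sub>R d)"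
        using eqn by auto
      have "phi 0 = z" by (simp add: phi_def s0)
      then show ?thesis unfolding e2 using \<open>((\<lambda>x. (\<alpha> + \<gamma> * s x) *\<^sub>R d) has_integral (phi t - phi 0)) {0..t}\<close> by simp
    qed
  qed
  show ?thesis
    unfolding reach_within_def
  proof (intro exI conjI)
    show "0 \<le> T" using T by simp
    show "piecewise_continuous_on T u" by (rule pc)
    show "is_solution A a B u z T phi" by (rule sol)
    show "phi T = y" by (simp add: phi_def sT d_def)
    show "\<forall>t\<in>{0..T}. phi t \<in> closed_segment z y"
    proof
      fix t assume "t \<in> {0..T}"
      then have "0 \<le> s t" "s t \<le> 1" using s01 by auto
      moreover have "phi t = (1 - s t) *\<^sub>R z + s t *\<^sub>R y"
        by (simp add: phi_def d_def algebra_simps)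
      ultimately show "phi t \<in> closed_segment z y" unfolding in_segment by blast
    qed
  qed
qed

end
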